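(* Let $T_1,T_2$ be tables joined on column $J$, where $T_1$ has a real-valued column $W$. Let $0<p_1,q_1,p_2,q_2\le1$, $S_1=\mathrm{UBS}_{p_1,q_1}(T_1,J)$, $S_2=\mathrm{UBS}_{p_2,q_2}(T_2,J)$, $p=\min\{p_1,p_2\}$, and $\hat J_{\mathrm{sum}}=\frac{1}{pq_1q_2}\sum_{(t_1,t_2)\in S_1\bowtie_J S_2}t_1.W$. Then $$\mathrm{Var}[\hat J_{\mathrm{sum}}]=\frac{1-q_2}{pq_2}\beta_1+\frac{1-q_1}{pq_1}\beta_2+\frac{(1-q_1)(1-q_2)}{pq_1q_2}\beta_3+\frac{1-p}{p}\beta_4,$$ where $\beta_1=\sum_v a_v^2\mu_v^2b_v$, $\beta_2=\sum_v a_v(\mu_v^2+\sigma_v^2)b_v^2$, $\beta_3=\sum_v a_v(\mu_v^2+\sigma_v^2)b_v$, $\beta_4=\sum_v a_v^2\mu_v^2b_v^2$.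
   Context: $T_1,T_2$ are finite multisets of tuples with a join attribute $J$ taking values in a finite set $\mathcal U$; $a_v$ (resp. $b_v$) is the number of tuples of $T_1$ (resp. $T_2$) with $J$-value $v$. For each $v$ with $a_v>0$, $\mu_v$ and $\sigma_v^2$ are the mean and (population) variance of the $W$-values of the $a_v$ tuples of $T_1$ with $J$-value $v$ (so $a_v(\mu_v^2+\sigma_v^2)$ is the sum of their squared $W$-values); terms with $a_v=0$ contribute $0$. $X\bowtie_J Y$ is the set of pairs $(t_1,t_2)\in X\times Y$ with $t_1.J=t_2.J$. $\mathrm{UBS}_{p,q}(T,J)$: given a hash function $h:\mathcal U\to[0,1]$, each tuple $t\in T$ with $h(t.J)<p$ is included independently with probability $q$; others are excluded. The values $h(v)$ are independent uniform on $[0,1]$, the same $h$ is used for both tables, and the Bernoulli coins are independent across all tuples and independent of $h$. *)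

theory Defs
  imports "HOL-Probability.Probability"
begin

text \<open>Tables are finite index sets of tuple identifiers (so duplicates are allowed,
  as for multisets); J1, J2 give the join attribute, W the real column of T1.\<close>

text \<open>Outcome of the random experiment: the hash function h (values on U),
  the Bernoulli coins of the tuples of T1 and those of T2.\<close>

definition ubs_model ::
  "'u set \<Rightarrow> 'i set \<Rightarrow> 'k set \<Rightarrow> real \<Rightarrow> real
    \<Rightarrow> (('u \<Rightarrow> real) \<times> ('i \<Rightarrow> bool) \<times> ('k \<Rightarrow> bool)) measure" where
  "ubs_model U I1 I2 q1 q2 =
     (PiM U (\<lambda>_. uniform_measure lborel {0..1::real}))
       \<Otimes>\<^sub>M ((PiM I1 (\<lambda>_. measure_pmf (bernoulli_pmf q1)))
       \<Otimes>\<^sub>M (PiM I2 (\<lambda>_. measure_pmf (bernoulli_pmf q2))))"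

definition UBS :: "real \<Rightarrow> ('u \<Rightarrow> real) \<Rightarrow> ('i \<Rightarrow> bool) \<Rightarrow> 'i set \<Rightarrow> ('i \<Rightarrow> 'u) \<Rightarrow> 'i set" where
  "UBS p h c T J = {t \<in> T. h (J t) < p \<and> c t}"

definition join :: "'i set \<Rightarrow> ('i \<Rightarrow> 'u) \<Rightarrow> 'k set \<Rightarrow> ('k \<Rightarrow> 'u) \<Rightarrow> ('i \<times> 'k) set" where
  "join X J1 Y J2 = {(t1, t2) \<in> X \<times> Y. J1 t1 = J2 t2}"

definition cnt :: "'i set \<Rightarrow> ('i \<Rightarrow> 'u) \<Rightarrow> 'u \<Rightarrow> real" where
  "cnt T J v = real (card {t \<in> T. J t = v})"

definition grp_mean :: "'i set \<Rightarrow> ('i \<Rightarrow> 'u) \<Rightarrow> ('i \<Rightarrow> real) \<Rightarrow> 'u \<Rightarrow> real" where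
  "grp_mean T J W v = (\<Sum>t\<in>{t \<in> T. J t = v}. W t) / cnt T J v"

text \<open>population variance (0 for empty groups, where all terms vanish anyway)\<close>
definition grp_var :: "'i set \<Rightarrow> ('i \<Rightarrow> 'u) \<Rightarrow> ('i \<Rightarrow> real) \<Rightarrow> 'u \<Rightarrow> real" where
  "grp_var T J W v = (\<Sum>t\<in>{t \<in> T. J t = v}. (W t - grp_mean T J W v)\<^sup>2) / cnt T J v"

end

theory Submission
  imports Defs
begin



lemma pair_mult:
  fixes f :: "'a \<Rightarrow> real" and g :: "'b \<Rightarrow> real"
  assumes A: "prob_space A" and B: "prob_space B"
    and [measurable]: "f \<in> borel_measurable A" "g \<in> borel_measurable B"
    and bf: "\<And>x. x \<in> space A \<Longrightarrow> \<bar>f x\<bar> \<le> Bf"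
    and bg: "\<And>y. y \<in> space B \<Longrightarrow> \<bar>g y\<bar> \<le> Bg"
  shows "integrable (A \<Otimes>\<^sub>M B) (\<lambda>z. f (fst z) * g (snd z))"
    and "integral\<^sup>L (A \<Otimes>\<^sub>M B) (\<lambda>z. f (fst z) * g (snd z)) = integral\<^sup>L A f * integral\<^sup>L B g"
proof -
  interpret pair_prob_space A B using A B by (simp add: pair_prob_space_def pair_sigma_finite_def prob_space_imp_sigma_finite)
  show int: "integrable (A \<Otimes>\<^sub>M B) (\<lambda>z. f (fst z) * g (snd z))"
  proof (rule P.integrable_const_bound[where B="Bf * Bg"])
    show "AE x in A \<Otimes>\<^sub>M B. norm (f (fst x) * g (snd x)) \<le> Bf * Bg"
    proof (rule AE_I2)
      fix x assume "x \<in> space (A \<Otimes>\<^sub>M B)"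
      then have "fst x \<in> space A" "snd x \<in> space B" by (auto simp: space_pair_measure)
      then show "norm (f (fst x) * g (snd x)) \<le> Bf * Bg"
        using bf bg by (auto simp: abs_mult intro!: mult_mono order_trans[OF abs_ge_zero])
    qed
  qed measurable
  have "integral\<^sup>L (A \<Otimes>\<^sub>M B) (\<lambda>z. f (fst z) * g (snd z)) = (\<integral>x. (\<integral>y. f x * g y \<partial>B) \<partial>A)"
    using integral_fst'[OF int] by (simp add: split_beta')
  also have "\<dots> = integral\<^sup>L A f * integral\<^sup>L B g"
    by simp
  finally show "integral\<^sup>L (A \<Otimes>\<^sub>M B) (\<lambda>z. f (fst z) * g (snd z)) = integral\<^sup>L A f * integral\<^sup>L B g" .
qed

lemma pi_one:
  fixes N :: "'b measure" and f :: "'b \<Rightarrow> real"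
  assumes N: "prob_space N" and I: "finite I" "t \<in> I" and [measurable]: "f \<in> borel_measurable N"
    and bf: "\<And>y. y \<in> space N \<Longrightarrow> \<bar>f y\<bar> \<le> Bf"
  shows "integral\<^sup>L (PiM I (\<lambda>_. N)) (\<lambda>x. f (x t)) = integral\<^sup>L N f"
proof -
  interpret N: prob_space N by fact
  interpret product_prob_space "\<lambda>_. N" by unfold_locales
  have intf: "integrable N f"
    by (rule N.integrable_const_bound[where B=Bf]) (auto intro!: AE_I2 bf)
  have "integral\<^sup>L (PiM I (\<lambda>_. N)) (\<lambda>x. f (x t)) = integral\<^sup>L (PiM I (\<lambda>_. N)) (\<lambda>x. \<Prod>i\<in>I. (if i = t then f else (\<lambda>_. 1)) (x i))"
  proof -
    have e: "\<And>x i. (if i = t then f else (\<lambda>_. 1)) (x i) = (if i = t then f (x t) else 1)" by simp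
    show ?thesis using I by (simp only: e prod.delta) simp
  qed
  also have "\<dots> = (\<Prod>i\<in>I. integral\<^sup>L N (if i = t then f else (\<lambda>_. 1)))"
    by (rule product_integral_prod) (auto simp: I intf)
  also have "\<dots> = integral\<^sup>L N f"
  proof -
    have e: "\<And>i. integral\<^sup>L N (if i = t then f else (\<lambda>_. 1)) = (if i = t then integral\<^sup>L N f else 1)" by (simp add: N.prob_space)
    show ?thesis using I by (simp only: e prod.delta) simp
  qed
  finally show ?thesis .
qed

lemma prod_two:
  fixes a b :: "'c::comm_monoid_mult"
  assumes "finite I" "t \<in> I" "s \<in> I" "t \<noteq> s"
  shows "(\<Prod>i\<in>I. if i = t then a else if i = s then b else 1) = a * b"
proof -
  have "(\<Prod>i\<in>I. if i = t then a else if i = s then b else 1)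
     = (if t = t then a else if t = s then b else 1) * (\<Prod>i\<in>I - {t}. if i = t then a else if i = s then b else 1)"
    by (rule prod.remove[OF assms(1,2)])
  also have "(\<Prod>i\<in>I - {t}. if i = t then a else if i = s then b else 1) = (\<Prod>i\<in>I - {t}. if i = s then b else 1)"
    by (rule prod.cong) auto
  also have "\<dots> = b" using assms by (simp add: prod.delta)
  finally show ?thesis by simp
qed

lemma pi_two:
  fixes N :: "'b measure" and f :: "'b \<Rightarrow> real"
  assumes N: "prob_space N" and I: "finite I" "t \<in> I" "s \<in> I" and [measurable]: "f \<in> borel_measurable N"
    and bf: "\<And>y. y \<in> space N \<Longrightarrow> \<bar>f y\<bar> \<le> Bf"
  shows "integral\<^sup>L (PiM I (\<lambda>_. N)) (\<lambda>x. f (x t) * f (x s)) =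
     (if t = s then integral\<^sup>L N (\<lambda>y. f y * f y) else integral\<^sup>L N f * integral\<^sup>L N f)"
proof (cases "t = s")
  case True
  have "\<bar>f y * f y\<bar> \<le> Bf * Bf" if y: "y \<in> space N" for y
  proof -
    have a: "\<bar>f y\<bar> \<le> Bf" using bf y .
    have "\<bar>f y\<bar> * \<bar>f y\<bar> \<le> Bf * Bf" by (rule mult_mono[OF a a]) (use a in auto)
    then show ?thesis by (simp add: abs_mult)
  qed
  then show ?thesis using True pi_one[OF N I(1,2), of "\<lambda>y. f y * f y" "Bf * Bf"] by simp
next
  case False
  interpret N: prob_space N by fact
  interpret product_prob_space "\<lambda>_. N" by unfold_locales
  have intf: "integrable N f"
    by (rule N.integrable_const_bound[where B=Bf]) (auto intro!: AE_I2 bf)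
  let ?g = "\<lambda>i. if i = t then f else if i = s then f else (\<lambda>_. 1)"
  have e: "\<And>x i. ?g i (x i) = (if i = t then f (x t) else if i = s then f (x s) else 1)" by simp
  have "integral\<^sup>L (PiM I (\<lambda>_. N)) (\<lambda>x. f (x t) * f (x s)) = integral\<^sup>L (PiM I (\<lambda>_. N)) (\<lambda>x. \<Prod>i\<in>I. ?g i (x i))"
    by (simp only: e prod_two[OF I(1,2,3) False])
  also have "\<dots> = (\<Prod>i\<in>I. integral\<^sup>L N (?g i))"
    by (rule product_integral_prod) (auto simp: I intf)
  also have "\<dots> = integral\<^sup>L N f * integral\<^sup>L N f"
  proof -
    have e: "\<And>i. integral\<^sup>L N (?g i) = (if i = t then integral\<^sup>L N f else if i = s then integral\<^sup>L N f else 1)" by (simp add: N.prob_space)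
    show ?thesis by (simp only: e prod_two[OF I(1,2,3) False])
  qed
  finally show ?thesis using False by simp
qed


lemma unif_prob: "prob_space (uniform_measure lborel {0..1::real})"
  by (rule prob_space_uniform_measure) auto

lemma unif_ind:
  assumes "0 \<le> p" "p \<le> (1::real)"
  shows "integral\<^sup>L (uniform_measure lborel {0..1::real}) (\<lambda>y. if y < p then 1 else 0) = p"
proof -
  have "(\<lambda>y::real. if y < p then 1 else 0 :: real) = indicator {..<p}"
    by (auto simp: indicator_def)
  moreover have "{0..1} \<inter> {..<p} = {0..<p}" using assms by auto
  ultimately show ?thesis using assms
    by (simp add: measure_uniform_measure)
qed

lemma bern_prob: "prob_space (measure_pmf (bernoulli_pmf q))"
  by (rule prob_space_measure_pmf)

lemma bern_ind:
  assumes "0 \<le> q" "q \<le> 1"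
  shows "integral\<^sup>L (measure_pmf (bernoulli_pmf q)) (\<lambda>b. if b then 1 else 0 :: real) = q"
  using assms by simp


lemma dsum:
  fixes x y :: "'a \<Rightarrow> real"
  assumes "finite A" "finite B"
  shows "(\<Sum>t\<in>A. \<Sum>s\<in>B. x t * y s * (if t = s then q else q * q)) =
         q * q * (sum x A * sum y B) + (q - q * q) * (\<Sum>t\<in>A \<inter> B. x t * y t)"
proof -
  have "(\<Sum>t\<in>A. \<Sum>s\<in>B. x t * y s * (if t = s then q else q * q)) =
        (\<Sum>t\<in>A. \<Sum>s\<in>B. q * q * (x t * y s) + (if t = s then (q - q * q) * (x t * y t) else 0))"
    by (intro sum.cong refl) (auto simp: algebra_simps)
  also have "\<dots> = q * q * (sum x A * sum y B) + (\<Sum>t\<in>A. if t \<in> B then (q - q * q) * (x t * y t) else 0)"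
  proof -
    have "(\<Sum>t\<in>A. \<Sum>s\<in>B. q * q * (x t * y s)) = q * q * (sum x A * sum y B)"
      unfolding sum_product by (simp add: sum_distrib_left)
    then show ?thesis using assms by (simp add: sum.distrib sum.delta)
  qed
  also have "(\<Sum>t\<in>A. if t \<in> B then (q - q * q) * (x t * y t) else 0) = (q - q * q) * (\<Sum>t\<in>A \<inter> B. x t * y t)"
    using assms by (simp add: sum.inter_restrict sum_distrib_left if_distrib cong: if_cong)
  finally show ?thesis .
qed

lemma diag_split:
  fixes F0 :: "'a \<Rightarrow> 'a \<Rightarrow> real"
  assumes "finite U"
  shows "(\<Sum>v\<in>U. \<Sum>w\<in>U. if v = w then Fd v else F0 v w) =
         (\<Sum>v\<in>U. \<Sum>w\<in>U. F0 v w) + (\<Sum>v\<in>U. Fd v - F0 v v)"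
proof -
  have "(\<Sum>v\<in>U. \<Sum>w\<in>U. if v = w then Fd v else F0 v w) =
        (\<Sum>v\<in>U. \<Sum>w\<in>U. F0 v w + (if v = w then Fd v - F0 v v else 0))"
    by (intro sum.cong refl) auto
  also have "\<dots> = (\<Sum>v\<in>U. \<Sum>w\<in>U. F0 v w) + (\<Sum>v\<in>U. Fd v - F0 v v)"
    using assms by (simp add: sum.distrib sum.delta)
  finally show ?thesis .
qed


lemma triple:
  fixes f :: "'a \<Rightarrow> real" and g :: "'b \<Rightarrow> real" and k :: "'c \<Rightarrow> real"
  assumes A: "prob_space A" and B: "prob_space B" and C: "prob_space C"
    and [measurable]: "f \<in> borel_measurable A" "g \<in> borel_measurable B" "k \<in> borel_measurable C"
    and bf: "\<And>x. x \<in> space A \<Longrightarrow> \<bar>f x\<bar> \<le> Bf"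
    and bg: "\<And>y. y \<in> space B \<Longrightarrow> \<bar>g y\<bar> \<le> Bg"
    and bk: "\<And>y. y \<in> space C \<Longrightarrow> \<bar>k y\<bar> \<le> Bk"
  shows "integrable (A \<Otimes>\<^sub>M (B \<Otimes>\<^sub>M C)) (\<lambda>z. f (fst z) * (g (fst (snd z)) * k (snd (snd z))))"
    and "integral\<^sup>L (A \<Otimes>\<^sub>M (B \<Otimes>\<^sub>M C)) (\<lambda>z. f (fst z) * (g (fst (snd z)) * k (snd (snd z))))
         = integral\<^sup>L A f * (integral\<^sup>L B g * integral\<^sup>L C k)"
proof -
  interpret BC: pair_prob_space B C using B C by (simp add: pair_prob_space_def pair_sigma_finite_def prob_space_imp_sigma_finite)
  have bgk: "\<bar>g (fst y) * k (snd y)\<bar> \<le> Bg * Bk" if "y \<in> space (B \<Otimes>\<^sub>M C)" for y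
  proof -
    have a: "\<bar>g (fst y)\<bar> \<le> Bg" "\<bar>k (snd y)\<bar> \<le> Bk" using that bg bk by (auto simp: space_pair_measure)
    have "\<bar>g (fst y)\<bar> * \<bar>k (snd y)\<bar> \<le> Bg * Bk" by (rule mult_mono[OF a]) (use a in auto)
    then show ?thesis by (simp add: abs_mult)
  qed
  have m: "(\<lambda>y. g (fst y) * k (snd y)) \<in> borel_measurable (B \<Otimes>\<^sub>M C)" by measurable
  note r = pair_mult[OF A BC.P.prob_space_axioms assms(4) m bf bgk]
  show "integrable (A \<Otimes>\<^sub>M (B \<Otimes>\<^sub>M C)) (\<lambda>z. f (fst z) * (g (fst (snd z)) * k (snd (snd z))))"
    using r(1) by simp
  show "integral\<^sup>L (A \<Otimes>\<^sub>M (B \<Otimes>\<^sub>M C)) (\<lambda>z. f (fst z) * (g (fst (snd z)) * k (snd (snd z))))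
         = integral\<^sup>L A f * (integral\<^sup>L B g * integral\<^sup>L C k)"
    using r(2) pair_mult(2)[OF B C assms(5,6) bg bk] by simp
qed



lemma abs_mult_bound:
  fixes f g :: real
  assumes "\<bar>f\<bar> \<le> a" "\<bar>g\<bar> \<le> b"
  shows "\<bar>f * g\<bar> \<le> a * b"
proof -
  have "\<bar>f\<bar> * \<bar>g\<bar> \<le> a * b" by (rule mult_mono[OF assms]) (use assms in auto)
  then show ?thesis by (simp add: abs_mult)
qed

lemma bern_meas: "(f :: bool \<Rightarrow> real) \<in> borel_measurable (measure_pmf (bernoulli_pmf q))"
  by simp

lemma bern_lin_meas:
  assumes "finite T" "A \<subseteq> T"
  shows "(\<lambda>c. \<Sum>t\<in>A. x t * (if c t then 1 else 0 :: real)) \<in> borel_measurable (PiM T (\<lambda>_. measure_pmf (bernoulli_pmf q)))"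
proof (rule borel_measurable_sum)
  fix t assume "t \<in> A"
  then have t: "t \<in> T" using assms by auto
  have "(\<lambda>c. c t) \<in> measurable (PiM T (\<lambda>_. measure_pmf (bernoulli_pmf q))) (measure_pmf (bernoulli_pmf q))"
    using t by (rule measurable_component_singleton)
  then show "(\<lambda>c. x t * (if c t then 1 else 0 :: real)) \<in> borel_measurable (PiM T (\<lambda>_. measure_pmf (bernoulli_pmf q)))"
    by (intro borel_measurable_times borel_measurable_const measurable_compose[OF _ bern_meas])
qed

lemma bern_lin_bound: "\<bar>\<Sum>t\<in>A. x t * (if c t then 1 else 0 :: real)\<bar> \<le> (\<Sum>t\<in>A. \<bar>x t\<bar>)"
  by (rule order_trans[OF sum_abs]) (intro sum_mono, auto)

lemma bern_lin:
  assumes "finite T" "A \<subseteq> T" "0 \<le> q" "q \<le> 1"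
  shows "integral\<^sup>L (PiM T (\<lambda>_. measure_pmf (bernoulli_pmf q))) (\<lambda>c. \<Sum>t\<in>A. x t * (if c t then 1 else 0 :: real))
    = q * sum x A"
proof -
  let ?N = "measure_pmf (bernoulli_pmf q)"
  let ?P = "PiM T (\<lambda>_. ?N)"
  interpret P: prob_space ?P by (rule prob_space_PiM) (rule bern_prob)
  have fA: "finite A" using assms finite_subset by blast
  have cm: "(\<lambda>c. c t) \<in> measurable ?P ?N" if "t \<in> A" for t
    using that assms by (intro measurable_component_singleton) auto
  have int: "integrable ?P (\<lambda>c. x t * (if c t then 1 else 0 :: real))" if "t \<in> A" for t
    by (rule P.integrable_const_bound[where B="\<bar>x t\<bar>"])
       (auto intro!: borel_measurable_times measurable_compose[OF cm[OF that] bern_meas])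
  have "integral\<^sup>L ?P (\<lambda>c. \<Sum>t\<in>A. x t * (if c t then 1 else 0 :: real))
      = (\<Sum>t\<in>A. x t * integral\<^sup>L ?P (\<lambda>c. (if c t then 1 else 0 :: real)))"
    using int by (simp add: integral_sum)
  also have "\<dots> = (\<Sum>t\<in>A. x t * q)"
  proof (intro sum.cong refl)
    fix t assume "t \<in> A"
    then have "integral\<^sup>L ?P (\<lambda>c. (if c t then 1 else 0 :: real)) = integral\<^sup>L ?N (\<lambda>b. if b then 1 else 0 :: real)"
      using assms by (intro pi_one[OF bern_prob assms(1), where Bf=1]) auto
    then show "x t * integral\<^sup>L ?P (\<lambda>c. (if c t then 1 else 0 :: real)) = x t * q"
      using assms by simp
  qed
  finally show ?thesis by (simp add: sum_distrib_left mult.commute)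
qed

lemma bern_quad:
  assumes "finite T" "A \<subseteq> T" "B \<subseteq> T" "0 \<le> q" "q \<le> 1"
  shows "integral\<^sup>L (PiM T (\<lambda>_. measure_pmf (bernoulli_pmf q)))
     (\<lambda>c. (\<Sum>t\<in>A. x t * (if c t then 1 else 0 :: real)) * (\<Sum>s\<in>B. y s * (if c s then 1 else 0 :: real)))
    = q * q * (sum x A * sum y B) + (q - q * q) * (\<Sum>t\<in>A \<inter> B. x t * y t)"
proof -
  let ?N = "measure_pmf (bernoulli_pmf q)"
  let ?P = "PiM T (\<lambda>_. ?N)"
  let ?e = "\<lambda>b. if b then 1 else 0 :: real"
  interpret P: prob_space ?P by (rule prob_space_PiM) (rule bern_prob)
  have fA: "finite A" "finite B" using assms finite_subset by blast+
  have cm: "(\<lambda>c. c t) \<in> measurable ?P ?N" if "t \<in> T" for t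
    using that assms by (intro measurable_component_singleton) auto
  have int: "integrable ?P (\<lambda>c. x t * y s * (?e (c t) * ?e (c s)))" if "t \<in> T" "s \<in> T" for t s
    by (rule P.integrable_const_bound[where B="\<bar>x t * y s\<bar>"])
       (auto intro!: borel_measurable_times measurable_compose[OF cm[OF that(1)] bern_meas]
          measurable_compose[OF cm[OF that(2)] bern_meas])
  have eq: "(\<lambda>c. (\<Sum>t\<in>A. x t * ?e (c t)) * (\<Sum>s\<in>B. y s * ?e (c s)))
     = (\<lambda>c. \<Sum>t\<in>A. \<Sum>s\<in>B. x t * y s * (?e (c t) * ?e (c s)))"
    by (auto simp: sum_product fun_eq_iff intro!: sum.cong)
  have "integral\<^sup>L ?P (\<lambda>c. (\<Sum>t\<in>A. x t * ?e (c t)) * (\<Sum>s\<in>B. y s * ?e (c s)))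
      = (\<Sum>t\<in>A. \<Sum>s\<in>B. x t * y s * integral\<^sup>L ?P (\<lambda>c. ?e (c t) * ?e (c s)))"
    unfolding eq
  proof -
    have i2: "integrable ?P (\<lambda>c. x t * y s * (?e (c t) * ?e (c s)))" if "t \<in> A" "s \<in> B" for t s
      using int that assms by auto
    have "integral\<^sup>L ?P (\<lambda>c. \<Sum>t\<in>A. \<Sum>s\<in>B. x t * y s * (?e (c t) * ?e (c s)))
        = (\<Sum>t\<in>A. integral\<^sup>L ?P (\<lambda>c. \<Sum>s\<in>B. x t * y s * (?e (c t) * ?e (c s))))"
      by (rule Bochner_Integration.integral_sum) (use i2 in \<open>auto intro!: Bochner_Integration.integrable_sum\<close>)
    also have "\<dots> = (\<Sum>t\<in>A. \<Sum>s\<in>B. integral\<^sup>L ?P (\<lambda>c. x t * y s * (?e (c t) * ?e (c s))))"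
      by (intro sum.cong refl Bochner_Integration.integral_sum i2)
    also have "\<dots> = (\<Sum>t\<in>A. \<Sum>s\<in>B. x t * y s * integral\<^sup>L ?P (\<lambda>c. ?e (c t) * ?e (c s)))"
      by (intro sum.cong refl integral_mult_right_zero)
    finally show "integral\<^sup>L ?P (\<lambda>c. \<Sum>t\<in>A. \<Sum>s\<in>B. x t * y s * (?e (c t) * ?e (c s)))
      = (\<Sum>t\<in>A. \<Sum>s\<in>B. x t * y s * integral\<^sup>L ?P (\<lambda>c. ?e (c t) * ?e (c s)))" .
  qed
  also have "\<dots> = (\<Sum>t\<in>A. \<Sum>s\<in>B. x t * y s * (if t = s then q else q * q))"
  proof (intro sum.cong refl)
    fix t s assume "t \<in> A" "s \<in> B"
    then have "integral\<^sup>L ?P (\<lambda>c. ?e (c t) * ?e (c s)) = (if t = s then integral\<^sup>L ?N (\<lambda>b. ?e b * ?e b) else integral\<^sup>L ?N ?e * integral\<^sup>L ?N ?e)"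
      using assms by (intro pi_two[OF bern_prob assms(1), where Bf=1]) auto
    then show "x t * y s * integral\<^sup>L ?P (\<lambda>c. ?e (c t) * ?e (c s)) = x t * y s * (if t = s then q else q * q)"
      using assms by simp
  qed
  also have "\<dots> = q * q * (sum x A * sum y B) + (q - q * q) * (\<Sum>t\<in>A \<inter> B. x t * y t)"
    by (rule dsum[OF fA])
  finally show ?thesis .
qed




theorem lemma5:
  fixes U :: "'u set" and T1 :: "'i set" and T2 :: "'k set"
    and J1 :: "'i \<Rightarrow> 'u" and J2 :: "'k \<Rightarrow> 'u" and W :: "'i \<Rightarrow> real"
    and p1 q1 p2 q2 :: real
  assumes "finite U" "finite T1" "finite T2"
    and "\<forall>t\<in>T1. J1 t \<in> U" "\<forall>t\<in>T2. J2 t \<in> U"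
    and "0 < p1" "p1 \<le> 1" "0 < q1" "q1 \<le> 1"
    and "0 < p2" "p2 \<le> 1" "0 < q2" "q2 \<le> 1"
  defines "p \<equiv> min p1 p2"
  defines "M \<equiv> ubs_model U T1 T2 q1 q2"
    and "Jsum \<equiv> (\<lambda>(h, c1, c2).
           1 / (p * q1 * q2) *
           (\<Sum>(t1, t2)\<in>join (UBS p1 h c1 T1 J1) J1 (UBS p2 h c2 T2 J2) J2. W t1))"
    and "a \<equiv> cnt T1 J1" and "b \<equiv> cnt T2 J2"
    and "\<mu> \<equiv> grp_mean T1 J1 W" and "\<sigma>2 \<equiv> grp_var T1 J1 W"
  defines "\<beta>1 \<equiv> (\<Sum>v\<in>U. (a v)\<^sup>2 * (\<mu> v)\<^sup>2 * b v)"
    and "\<beta>2 \<equiv> (\<Sum>v\<in>U. a v * ((\<mu> v)\<^sup>2 + \<sigma>2 v) * (b v)\<^sup>2)"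
    and "\<beta>3 \<equiv> (\<Sum>v\<in>U. a v * ((\<mu> v)\<^sup>2 + \<sigma>2 v) * b v)"
    and "\<beta>4 \<equiv> (\<Sum>v\<in>U. (a v)\<^sup>2 * (\<mu> v)\<^sup>2 * (b v)\<^sup>2)"
  shows "prob_space.variance M Jsum =
           (1 - q2) / (p * q2) * \<beta>1 + (1 - q1) / (p * q1) * \<beta>2
         + (1 - q1) * (1 - q2) / (p * q1 * q2) * \<beta>3 + (1 - p) / p * \<beta>4"
proof -
  note fin = assms(1,2,3)
  have p0: "0 < p" "p \<le> 1" using assms(6,7,10,11) by (auto simp: p_def)
  define UH where "UH = uniform_measure lborel {0..1::real}"
  define B1 where "B1 = measure_pmf (bernoulli_pmf q1)"
  define B2 where "B2 = measure_pmf (bernoulli_pmf q2)"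
  define H where "H = PiM U (\<lambda>_. UH)"
  define C1 where "C1 = PiM T1 (\<lambda>_. B1)"
  define C2 where "C2 = PiM T2 (\<lambda>_. B2)"
  have M_eq: "M = H \<Otimes>\<^sub>M (C1 \<Otimes>\<^sub>M C2)"
    by (simp add: M_def ubs_model_def H_def C1_def C2_def UH_def B1_def B2_def)
  have pUH: "prob_space UH" unfolding UH_def by (rule unif_prob)
  have pB1: "prob_space B1" unfolding B1_def by (rule bern_prob)
  have pB2: "prob_space B2" unfolding B2_def by (rule bern_prob)
  have pH: "prob_space H" unfolding H_def by (rule prob_space_PiM) (rule pUH)
  have pC1: "prob_space C1" unfolding C1_def by (rule prob_space_PiM) (rule pB1)
  have pC2: "prob_space C2" unfolding C2_def by (rule prob_space_PiM) (rule pB2)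
  interpret C12: pair_prob_space C1 C2 using pC1 pC2 by (simp add: pair_prob_space_def pair_sigma_finite_def prob_space_imp_sigma_finite)
  interpret PM: pair_prob_space H "C1 \<Otimes>\<^sub>M C2" using pH C12.P.prob_space_axioms by (simp add: pair_prob_space_def pair_sigma_finite_def prob_space_imp_sigma_finite)
  interpret Mp: prob_space M unfolding M_eq by (rule PM.P.prob_space_axioms)

  define G1 where "G1 v = {t \<in> T1. J1 t = v}" for v
  define G2 where "G2 v = {t \<in> T2. J2 t = v}" for v
  define e :: "bool \<Rightarrow> real" where "e b = (if b then 1 else 0)" for b
  define ind :: "real \<Rightarrow> real" where "ind y = (if y < p then 1 else 0)" for y
  define X where "X v c = (\<Sum>t\<in>G1 v. W t * e (c t))" for v c
  define Y where "Y v c = (\<Sum>t\<in>G2 v. e (c t))" for v c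
  define K where "K = 1 / (p * q1 * q2)"
  define A where "A v = (\<Sum>t\<in>G1 v. W t)" for v
  define S where "S v = (\<Sum>t\<in>G1 v. W t * W t)" for v
  define XB where "XB v = (\<Sum>t\<in>G1 v. \<bar>W t\<bar>)" for v
  have finG1: "finite (G1 v)" for v using fin unfolding G1_def by auto
  have finG2: "finite (G2 v)" for v using fin unfolding G2_def by auto

  have core: "(\<Sum>(t1, t2)\<in>join (UBS p1 h c1 T1 J1) J1 (UBS p2 h c2 T2 J2) J2. W t1)
      = (\<Sum>v\<in>U. ind (h v) * (X v c1 * Y v c2))" for h c1 c2
  proof -
    define Q where "Q t1 t2 \<longleftrightarrow> J1 t1 = J2 t2 \<and> h (J1 t1) < p1 \<and> c1 t1 \<and> h (J2 t2) < p2 \<and> c2 t2" for t1 t2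
    have jeq: "join (UBS p1 h c1 T1 J1) J1 (UBS p2 h c2 T2 J2) J2 = {z \<in> T1 \<times> T2. Q (fst z) (snd z)}"
      by (auto simp: join_def UBS_def Q_def)
    have "(\<Sum>(t1, t2)\<in>join (UBS p1 h c1 T1 J1) J1 (UBS p2 h c2 T2 J2) J2. W t1)
        = (\<Sum>z\<in>T1 \<times> T2. if Q (fst z) (snd z) then W (fst z) else 0)"
      unfolding jeq using fin by (subst sum.inter_filter) (auto intro!: sum.cong split: prod.splits)
    also have "\<dots> = (\<Sum>t1\<in>T1. \<Sum>t2\<in>T2. if Q t1 t2 then W t1 else 0)"
      by (subst sum.cartesian_product) (simp add: split_beta)
    finally have L: "(\<Sum>(t1, t2)\<in>join (UBS p1 h c1 T1 J1) J1 (UBS p2 h c2 T2 J2) J2. W t1)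
        = (\<Sum>t1\<in>T1. \<Sum>t2\<in>T2. if Q t1 t2 then W t1 else 0)" .
    have inner: "ind (h v) * (W t1 * e (c1 t1)) * Y v c2 = (\<Sum>t2\<in>T2. if Q t1 t2 then W t1 else 0)"
      if t1: "t1 \<in> G1 v" for v t1
    proof -
      have "ind (h v) * (W t1 * e (c1 t1)) * Y v c2 = (\<Sum>t2\<in>G2 v. ind (h v) * (W t1 * e (c1 t1)) * e (c2 t2))"
        by (simp add: Y_def sum_distrib_left)
      also have "\<dots> = (\<Sum>t2\<in>T2. if J2 t2 = v then ind (h v) * (W t1 * e (c1 t1)) * e (c2 t2) else 0)"
        unfolding G2_def using fin by (subst sum.inter_filter) auto
      also have "\<dots> = (\<Sum>t2\<in>T2. if Q t1 t2 then W t1 else 0)"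
        using t1 by (intro sum.cong refl) (auto simp: G1_def Q_def ind_def e_def p_def)
      finally show ?thesis .
    qed
    have "(\<Sum>v\<in>U. ind (h v) * (X v c1 * Y v c2)) = (\<Sum>v\<in>U. \<Sum>t1\<in>G1 v. ind (h v) * (W t1 * e (c1 t1)) * Y v c2)"
      by (simp add: X_def sum_distrib_left sum_distrib_right mult.assoc)
    also have "\<dots> = (\<Sum>v\<in>U. \<Sum>t1\<in>G1 v. \<Sum>t2\<in>T2. if Q t1 t2 then W t1 else 0)"
      using inner by (intro sum.cong refl) auto
    also have "\<dots> = (\<Sum>t1\<in>T1. \<Sum>t2\<in>T2. if Q t1 t2 then W t1 else 0)"
      unfolding G1_def using fin assms(4) by (intro sum.group) auto
    finally show ?thesis using L by simp
  qed
  have Jsum_eq: "Jsum = (\<lambda>z. K * (\<Sum>v\<in>U. ind (fst z v) * (X v (fst (snd z)) * Y v (snd (snd z)))))"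
    by (auto simp: Jsum_def K_def core fun_eq_iff)
  define fH where "fH v w h = ind (h v) * ind (h w)" for v w and h :: "'u \<Rightarrow> real"
  define gX where "gX v w c = X v c * X w c" for v w c
  define kY where "kY v w c = Y v c * Y w c" for v w c
  define f1 where "f1 v h = ind (h v)" for v and h :: "'u \<Rightarrow> real"
  have ind_m: "ind \<in> borel_measurable UH" unfolding ind_def UH_def by measurable
  have ind_b: "\<bar>ind y\<bar> \<le> 1" for y by (simp add: ind_def)
  have hc: "(\<lambda>h. h v) \<in> measurable H UH" if "v \<in> U" for v
    unfolding H_def using that by (rule measurable_component_singleton)
  have fH_m: "fH v w \<in> borel_measurable H" if "v \<in> U" "w \<in> U" for v w
    unfolding fH_def using hc[OF that(1)] hc[OF that(2)] ind_m by measurable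
  have f1_m: "f1 v \<in> borel_measurable H" if "v \<in> U" for v
    unfolding f1_def using hc[OF that(1)] ind_m by measurable
  have fH_b: "\<bar>fH v w h\<bar> \<le> 1 * 1" for v w h
    unfolding fH_def by (intro abs_mult_bound ind_b)
  have f1_b: "\<bar>f1 v h\<bar> \<le> 1" for v h
    unfolding f1_def by (rule ind_b)
  have EH: "integral\<^sup>L H (fH v w) = (if v = w then p else p * p)" if "v \<in> U" "w \<in> U" for v w
  proof -
    have "integral\<^sup>L H (fH v w) = (if v = w then integral\<^sup>L UH (\<lambda>y. ind y * ind y) else integral\<^sup>L UH ind * integral\<^sup>L UH ind)"
      unfolding H_def fH_def by (rule pi_two[OF pUH fin(1) that ind_m ind_b])
    moreover have "integral\<^sup>L UH ind = p" unfolding UH_def ind_def using p0 by (intro unif_ind) auto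
    moreover have "(\<lambda>y. ind y * ind y) = ind" by (auto simp: ind_def fun_eq_iff)
    ultimately show ?thesis by simp
  qed
  have EH1: "integral\<^sup>L H (f1 v) = p" if "v \<in> U" for v
  proof -
    have "integral\<^sup>L H (f1 v) = integral\<^sup>L UH ind"
      unfolding H_def f1_def by (rule pi_one[OF pUH fin(1) that ind_m ind_b])
    also have "integral\<^sup>L UH ind = p" unfolding UH_def ind_def using p0 by (intro unif_ind) auto
    finally show ?thesis .
  qed
  have G1T: "G1 v \<subseteq> T1" for v by (auto simp: G1_def)
  have G2T: "G2 v \<subseteq> T2" for v by (auto simp: G2_def)
  have Xf: "X v = (\<lambda>c. \<Sum>t\<in>G1 v. W t * (if c t then 1 else 0 :: real))" for v
    by (auto simp: X_def e_def fun_eq_iff)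
  have Yf: "Y v = (\<lambda>c. \<Sum>t\<in>G2 v. 1 * (if c t then 1 else 0 :: real))" for v
    by (auto simp: Y_def e_def fun_eq_iff)
  have X_m: "X v \<in> borel_measurable C1" for v
    unfolding Xf C1_def B1_def by (rule bern_lin_meas[OF fin(2) G1T])
  have Y_m: "Y v \<in> borel_measurable C2" for v
    unfolding Yf C2_def B2_def by (rule bern_lin_meas[OF fin(3) G2T])
  have X_b: "\<bar>X v c\<bar> \<le> XB v" for v c
    unfolding Xf XB_def by (rule bern_lin_bound)
  have Y_b: "\<bar>Y v c\<bar> \<le> b v" for v c
  proof -
    have "\<bar>Y v c\<bar> \<le> (\<Sum>t\<in>G2 v. \<bar>1::real\<bar>)" unfolding Yf by (rule bern_lin_bound)
    then show ?thesis by (simp add: b_def cnt_def G2_def)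
  qed
  have gX_m: "gX v w \<in> borel_measurable C1" for v w
    unfolding gX_def using X_m[of v] X_m[of w] by measurable
  have kY_m: "kY v w \<in> borel_measurable C2" for v w
    unfolding kY_def using Y_m[of v] Y_m[of w] by measurable
  have gX_b: "\<bar>gX v w c\<bar> \<le> XB v * XB w" for v w c
    unfolding gX_def by (intro abs_mult_bound X_b)
  have kY_b: "\<bar>kY v w c\<bar> \<le> b v * b w" for v w c
    unfolding kY_def by (intro abs_mult_bound Y_b)
  have q1': "0 \<le> q1" "q1 \<le> 1" "0 \<le> q2" "q2 \<le> 1" using assms(8,9,12,13) by auto
  have EX: "integral\<^sup>L C1 (gX v w) = q1 * q1 * (A v * A w) + (q1 - q1 * q1) * (\<Sum>t\<in>G1 v \<inter> G1 w. W t * W t)" for v w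
    unfolding gX_def Xf C1_def B1_def A_def using bern_quad[OF fin(2) G1T G1T q1'(1,2)] by simp
  have EX1: "integral\<^sup>L C1 (X v) = q1 * A v" for v
    unfolding Xf C1_def B1_def A_def using bern_lin[OF fin(2) G1T q1'(1,2)] by simp
  have bG: "b v = (\<Sum>t\<in>G2 v. 1)" for v by (simp add: b_def cnt_def G2_def)
  have EY: "integral\<^sup>L C2 (kY v w) = q2 * q2 * (b v * b w) + (q2 - q2 * q2) * (\<Sum>t\<in>G2 v \<inter> G2 w. 1)" for v w
    unfolding kY_def Yf C2_def B2_def bG using bern_quad[OF fin(3) G2T G2T q1'(3,4), where x="\<lambda>_. 1" and y="\<lambda>_. 1"] by simp
  have EY1: "integral\<^sup>L C2 (Y v) = q2 * b v" for v
    unfolding Yf C2_def B2_def bG using bern_lin[OF fin(3) G2T q1'(3,4), where x="\<lambda>_. 1"] by simp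

  have T2: "integrable M (\<lambda>z. fH v w (fst z) * (gX v w (fst (snd z)) * kY v w (snd (snd z))))"
       "integral\<^sup>L M (\<lambda>z. fH v w (fst z) * (gX v w (fst (snd z)) * kY v w (snd (snd z))))
         = integral\<^sup>L H (fH v w) * (integral\<^sup>L C1 (gX v w) * integral\<^sup>L C2 (kY v w))"
    if "v \<in> U" "w \<in> U" for v w
    unfolding M_eq using triple[OF pH pC1 pC2 fH_m[OF that] gX_m kY_m fH_b gX_b kY_b] by auto
  have T1: "integrable M (\<lambda>z. f1 v (fst z) * (X v (fst (snd z)) * Y v (snd (snd z))))"
       "integral\<^sup>L M (\<lambda>z. f1 v (fst z) * (X v (fst (snd z)) * Y v (snd (snd z))))
         = integral\<^sup>L H (f1 v) * (integral\<^sup>L C1 (X v) * integral\<^sup>L C2 (Y v))"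
    if "v \<in> U" for v
    unfolding M_eq using triple[OF pH pC1 pC2 f1_m[OF that] X_m Y_m f1_b X_b Y_b] by auto
  have J1form: "Jsum = (\<lambda>z. K * (\<Sum>v\<in>U. f1 v (fst z) * (X v (fst (snd z)) * Y v (snd (snd z)))))"
    by (simp add: Jsum_eq f1_def)
  have J2form: "(\<lambda>z. (Jsum z)\<^sup>2) = (\<lambda>z. K * K * (\<Sum>v\<in>U. \<Sum>w\<in>U. fH v w (fst z) * (gX v w (fst (snd z)) * kY v w (snd (snd z)))))"
  proof
    fix z
    let ?a = "\<lambda>v. f1 v (fst z) * (X v (fst (snd z)) * Y v (snd (snd z)))"
    have "(Jsum z)\<^sup>2 = K * K * ((\<Sum>v\<in>U. ?a v) * (\<Sum>w\<in>U. ?a w))"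
      by (simp add: J1form power2_eq_square algebra_simps)
    also have "\<dots> = K * K * (\<Sum>v\<in>U. \<Sum>w\<in>U. ?a v * ?a w)"
      by (simp add: sum_product)
    also have "\<dots> = K * K * (\<Sum>v\<in>U. \<Sum>w\<in>U. fH v w (fst z) * (gX v w (fst (snd z)) * kY v w (snd (snd z))))"
      by (intro arg_cong[where f="\<lambda>x. K * K * x"] sum.cong refl) (simp add: fH_def gX_def kY_def f1_def algebra_simps)
    finally show "(Jsum z)\<^sup>2 = K * K * (\<Sum>v\<in>U. \<Sum>w\<in>U. fH v w (fst z) * (gX v w (fst (snd z)) * kY v w (snd (snd z))))" .
  qed
  have intJ: "integrable M Jsum"
    unfolding J1form by (intro integrable_mult_right Bochner_Integration.integrable_sum T1(1))
  have intJ2: "integrable M (\<lambda>z. (Jsum z)\<^sup>2)"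
    unfolding J2form by (intro integrable_mult_right Bochner_Integration.integrable_sum T2(1))
  have EJ: "Mp.expectation Jsum = K * (\<Sum>v\<in>U. p * (q1 * A v * (q2 * b v)))"
  proof -
    have "Mp.expectation Jsum = K * (\<Sum>v\<in>U. integral\<^sup>L M (\<lambda>z. f1 v (fst z) * (X v (fst (snd z)) * Y v (snd (snd z)))))"
      unfolding J1form by (simp add: Bochner_Integration.integral_sum T1(1))
    also have "\<dots> = K * (\<Sum>v\<in>U. p * (q1 * A v * (q2 * b v)))"
      by (intro arg_cong[where f="\<lambda>x. K * x"] sum.cong refl) (simp add: T1(2) EH1 EX1 EY1)
    finally show ?thesis .
  qed
  have EJ2: "Mp.expectation (\<lambda>z. (Jsum z)\<^sup>2) = K * K * (\<Sum>v\<in>U. \<Sum>w\<in>U. (if v = w then p else p * p) *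
      ((q1 * q1 * (A v * A w) + (q1 - q1 * q1) * (\<Sum>t\<in>G1 v \<inter> G1 w. W t * W t)) *
       (q2 * q2 * (b v * b w) + (q2 - q2 * q2) * (\<Sum>t\<in>G2 v \<inter> G2 w. 1))))"
  proof -
    have "Mp.expectation (\<lambda>z. (Jsum z)\<^sup>2) = K * K * (\<Sum>v\<in>U. \<Sum>w\<in>U. integral\<^sup>L M (\<lambda>z. fH v w (fst z) * (gX v w (fst (snd z)) * kY v w (snd (snd z)))))"
      unfolding J2form by (simp add: Bochner_Integration.integral_sum T2(1) Bochner_Integration.integrable_sum)
    also have "\<dots> = K * K * (\<Sum>v\<in>U. \<Sum>w\<in>U. (if v = w then p else p * p) *
      ((q1 * q1 * (A v * A w) + (q1 - q1 * q1) * (\<Sum>t\<in>G1 v \<inter> G1 w. W t * W t)) *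
       (q2 * q2 * (b v * b w) + (q2 - q2 * q2) * (\<Sum>t\<in>G2 v \<inter> G2 w. 1))))"
      by (intro arg_cong[where f="\<lambda>x. K * K * x"] sum.cong refl) (simp add: T2(2) EH EX EY)
    finally show ?thesis .
  qed
  define F0 where "F0 v w = p * p * (q1 * q1 * (A v * A w)) * (q2 * q2 * (b v * b w))" for v w
  define Fd where "Fd v = p * ((q1 * q1 * (A v * A v) + (q1 - q1 * q1) * S v) * (q2 * q2 * (b v * b v) + (q2 - q2 * q2) * b v))" for v
  have prodeq: "(if v = w then p else p * p) *
      ((q1 * q1 * (A v * A w) + (q1 - q1 * q1) * (\<Sum>t\<in>G1 v \<inter> G1 w. W t * W t)) *
       (q2 * q2 * (b v * b w) + (q2 - q2 * q2) * (\<Sum>t\<in>G2 v \<inter> G2 w. 1)))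
     = (if v = w then Fd v else F0 v w)" for v w
  proof (cases "v = w")
    case True
    then show ?thesis by (simp add: Fd_def S_def bG)
  next
    case False
    then have "G1 v \<inter> G1 w = {}" "G2 v \<inter> G2 w = {}" by (auto simp: G1_def G2_def)
    then show ?thesis using False by (simp add: F0_def algebra_simps)
  qed
  have c0: "p * q1 * q2 \<noteq> 0" using p0 assms(8,12) by auto
  have Kc: "K * (p * q1 * q2) = 1" using c0 by (simp add: K_def)
  have EJ': "Mp.expectation Jsum = (\<Sum>v\<in>U. A v * b v)"
  proof -
    have "Mp.expectation Jsum = K * (p * q1 * q2) * (\<Sum>v\<in>U. A v * b v)"
      unfolding EJ by (simp add: sum_distrib_left algebra_simps)
    then show ?thesis using Kc by simp
  qed
  have F0sum: "(\<Sum>v\<in>U. \<Sum>w\<in>U. F0 v w) = (p * q1 * q2) * (p * q1 * q2) * ((\<Sum>v\<in>U. A v * b v) * (\<Sum>w\<in>U. A w * b w))"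
    unfolding sum_product by (simp add: sum_distrib_left F0_def algebra_simps)
  have var1: "Mp.variance Jsum = K * K * (\<Sum>v\<in>U. Fd v - F0 v v)"
  proof -
    have "Mp.variance Jsum = Mp.expectation (\<lambda>z. (Jsum z)\<^sup>2) - (Mp.expectation Jsum)\<^sup>2"
      by (rule Mp.variance_eq[OF intJ intJ2])
    also have "Mp.expectation (\<lambda>z. (Jsum z)\<^sup>2) = K * K * ((\<Sum>v\<in>U. \<Sum>w\<in>U. F0 v w) + (\<Sum>v\<in>U. Fd v - F0 v v))"
      unfolding EJ2 prodeq by (simp add: diag_split[OF fin(1)])
    also have "K * K * ((\<Sum>v\<in>U. \<Sum>w\<in>U. F0 v w) + (\<Sum>v\<in>U. Fd v - F0 v v)) =
        (K * (p * q1 * q2)) * (K * (p * q1 * q2)) * ((\<Sum>v\<in>U. A v * b v) * (\<Sum>w\<in>U. A w * b w)) + K * K * (\<Sum>v\<in>U. Fd v - F0 v v)"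
      unfolding F0sum by (simp add: algebra_simps)
    finally show ?thesis unfolding EJ' Kc by (simp add: power2_eq_square)
  qed
  have amu: "a v * \<mu> v = A v" for v
  proof (cases "G1 v = {}")
    case True
    have "a v = 0" unfolding a_def cnt_def G1_def[symmetric] True by simp
    then show ?thesis unfolding A_def True by simp
  next
    case False
    then have "a v \<noteq> 0" using finG1[of v] by (simp add: a_def cnt_def G1_def)
    then show ?thesis by (simp add: \<mu>_def grp_mean_def a_def[symmetric] A_def G1_def)
  qed
  have asig: "a v * ((\<mu> v)\<^sup>2 + \<sigma>2 v) = S v" for v
  proof (cases "G1 v = {}")
    case True
    have "a v = 0" unfolding a_def cnt_def G1_def[symmetric] True by simp
    then show ?thesis unfolding S_def True by simp
  next
    case False
    then have a0: "a v \<noteq> 0" using finG1[of v] by (simp add: a_def cnt_def G1_def)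
    have ca: "a v = (\<Sum>t\<in>G1 v. 1)" by (simp add: a_def cnt_def G1_def)
    have "a v * \<sigma>2 v = (\<Sum>t\<in>G1 v. (W t - \<mu> v)\<^sup>2)"
      using a0 by (simp add: \<sigma>2_def grp_var_def a_def[symmetric] \<mu>_def[symmetric] G1_def)
    also have "\<dots> = (\<Sum>t\<in>G1 v. W t * W t - 2 * \<mu> v * W t + \<mu> v * \<mu> v)"
      by (intro sum.cong refl) (simp add: power2_eq_square algebra_simps)
    also have "\<dots> = S v - 2 * \<mu> v * A v + a v * (\<mu> v * \<mu> v)"
      by (simp add: sum.distrib sum_subtractf S_def A_def sum_distrib_left ca sum_distrib_right)
    finally have "a v * \<sigma>2 v = S v - 2 * \<mu> v * A v + a v * (\<mu> v * \<mu> v)" .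
    then show ?thesis using amu[of v] by (simp add: power2_eq_square algebra_simps)
  qed
  have rhs: "(1 - q2) / (p * q2) * \<beta>1 + (1 - q1) / (p * q1) * \<beta>2
         + (1 - q1) * (1 - q2) / (p * q1 * q2) * \<beta>3 + (1 - p) / p * \<beta>4
       = (\<Sum>v\<in>U. (1 - q2) / (p * q2) * ((A v)\<^sup>2 * b v) + (1 - q1) / (p * q1) * (S v * (b v)\<^sup>2)
         + (1 - q1) * (1 - q2) / (p * q1 * q2) * (S v * b v) + (1 - p) / p * ((A v)\<^sup>2 * (b v)\<^sup>2))"
  proof -
    have e1: "(a v)\<^sup>2 * (\<mu> v)\<^sup>2 = (A v)\<^sup>2" for v using amu[of v] by (simp add: power_mult_distrib[symmetric])
    have e2: "a v * ((\<mu> v)\<^sup>2 + \<sigma>2 v) * c = S v * c" for v c using asig[of v] by simp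
    show ?thesis unfolding \<beta>1_def \<beta>2_def \<beta>3_def \<beta>4_def e1 e2
      by (simp add: sum.distrib sum_distrib_left)
  qed
  have perv: "K * K * (Fd v - F0 v v) = (1 - q2) / (p * q2) * ((A v)\<^sup>2 * b v) + (1 - q1) / (p * q1) * (S v * (b v)\<^sup>2)
         + (1 - q1) * (1 - q2) / (p * q1 * q2) * (S v * b v) + (1 - p) / p * ((A v)\<^sup>2 * (b v)\<^sup>2)" for v
    using c0 unfolding K_def Fd_def F0_def by (simp add: field_simps power2_eq_square)
  show ?thesis unfolding var1 rhs sum_distrib_left perv ..
qed
end
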